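(* Let $a,b,\epsilon>0$ and let $n,U,d,m$ be positive integers. Let $X\in\mathbb{R}^{n\times U\times d}$ satisfy $\|X_{i,u,\cdot}\|_2\le b$ for all $i\in\{1,\dots,n\}$, $u\in\{1,\dots,U\}$, and let $M\in\mathbb{R}^{d\times m}$ be any fixed matrix. Then $$\log\mathcal{N}\Big(\{XA:\ A\in\mathbb{R}^{d\times m},\ \|A-M\|_{2,1}\le a\},\ \epsilon,\ \|\cdot\|_{*}\Big)\ \le\ \frac{64a^2b^2}{\epsilon^2}\log_2\!\Big[\Big(\frac{8ab}{\epsilon}+7\Big)mnU\Big],$$ where for $Y\in\mathbb{R}^{n\times U\times m}$, $\|Y\|_*=\max_{i\le n}\max_{u\le U}\big(\sum_{k=1}^m Y_{i,u,k}^2\big)^{1/2}$.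
   Context: For $X\in\mathbb{R}^{n\times U\times d}$ and $A\in\mathbb{R}^{d\times m}$, $XA\in\mathbb{R}^{n\times U\times m}$ is defined by $(XA)_{i,u,j}=\sum_{o=1}^d X_{i,u,o}A_{o,j}$. For $B\in\mathbb{R}^{d\times m}$, $\|B\|_{2,1}=\sum_{j=1}^m\|B_{\cdot,j}\|_2$ (sum over the $m$ columns/output channels of their Euclidean norms). For a subset $V$ of a normed space $(\mathbb{R}^N,\|\cdot\|)$, the covering number $\mathcal{N}(V,\epsilon,\|\cdot\|)$ is the minimum cardinality $k$ of a collection $v^1,\dots,v^k\in\mathbb{R}^N$ with $\sup_{v\in V}\min_j\|v-v^j\|\le\epsilon$. $\log$ denotes the natural logarithm. *)

theory Defs
  imports "HOL-Analysis.Analysis"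
begin

text \<open>Order-3 tensors in R^(n x U x k) are represented as functions
  nat => nat => nat => real (indices 0-based, only entries i<n, u<U, o<k matter);
  matrices in R^(d x m) as nat => nat => real.\<close>

definition tensor_mat_mult ::
  "nat \<Rightarrow> nat \<Rightarrow> nat \<Rightarrow> (nat \<Rightarrow> nat \<Rightarrow> nat \<Rightarrow> real) \<Rightarrow> (nat \<Rightarrow> nat \<Rightarrow> real)
   \<Rightarrow> (nat \<Rightarrow> nat \<Rightarrow> nat \<Rightarrow> real)" where
  "tensor_mat_mult n U d X A =
     (\<lambda>i u j. if i < n \<and> u < U then (\<Sum>l<d. X i u l * A l j) else 0)"

definition norm21 :: "nat \<Rightarrow> nat \<Rightarrow> (nat \<Rightarrow> nat \<Rightarrow> real) \<Rightarrow> real" where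
  "norm21 d m B = (\<Sum>j<m. sqrt (\<Sum>l<d. (B l j)\<^sup>2))"

definition star_norm :: "nat \<Rightarrow> nat \<Rightarrow> nat \<Rightarrow> (nat \<Rightarrow> nat \<Rightarrow> nat \<Rightarrow> real) \<Rightarrow> real" where
  "star_norm n U m Y = Max {sqrt (\<Sum>k<m. (Y i u k)\<^sup>2) | i u. i < n \<and> u < U}"

definition covering_number :: "'a set \<Rightarrow> 'a set \<Rightarrow> real \<Rightarrow> ('a \<Rightarrow> 'a \<Rightarrow> real) \<Rightarrow> enat" where
  "covering_number S V eps dist_fn =
     (INF C \<in> {C. C \<subseteq> S \<and> finite C \<and> (\<forall>v\<in>V. \<exists>c\<in>C. dist_fn v c \<le> eps)}. enat (card C))"

definition tensor_space :: "nat \<Rightarrow> nat \<Rightarrow> nat \<Rightarrow> (nat \<Rightarrow> nat \<Rightarrow> nat \<Rightarrow> real) set" where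
  "tensor_space n U m = {Y. \<forall>i u k. \<not>(i < n \<and> u < U \<and> k < m) \<longrightarrow> Y i u k = 0}"

end

theory Submission
  imports Defs
begin


definition upd :: "real \<Rightarrow> ('p \<Rightarrow> nat \<Rightarrow> real) \<Rightarrow> ('p \<times> bool) list \<Rightarrow> nat \<Rightarrow> real" where
  "upd \<eta> x L l = sum_list (map (\<lambda>(p,s). (if s then 1 else -1) * \<eta> * x p l) L)"

lemma upd_Cons: "upd \<eta> x ((p,s)#L) l = (if s then 1 else -1) * \<eta> * x p l + upd \<eta> x L l"
  by (simp add: upd_def)

lemma perceptron_step:
  fixes c w :: "nat \<Rightarrow> real" and x :: "nat \<Rightarrow> real"
  assumes xb: "(\<Sum>l<d. (x l)\<^sup>2) \<le> b\<^sup>2" and eta: "\<eta> > 0"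
    and e: "\<bar>\<Sum>l<d. (c l - w l) * x l\<bar> > \<eta> * b\<^sup>2"
  defines "s \<equiv> (\<Sum>l<d. (c l - w l) * x l) > 0"
  shows "(\<Sum>l<d. (c l - (w l + (if s then 1 else -1) * \<eta> * x l))\<^sup>2)
          \<le> (\<Sum>l<d. (c l - w l)\<^sup>2) - \<eta>\<^sup>2 * b\<^sup>2"
proof -
  define E where "E = (\<Sum>l<d. (c l - w l) * x l)"
  define \<sigma> :: real where "\<sigma> = (if s then 1 else -1)"
  have sE: "\<sigma> * E = \<bar>E\<bar>" using e unfolding \<sigma>_def s_def E_def by auto
  have "(\<Sum>l<d. (c l - (w l + \<sigma> * \<eta> * x l))\<^sup>2)
      = (\<Sum>l<d. (c l - w l)\<^sup>2 - 2 * (\<sigma> * \<eta>) * ((c l - w l) * x l) + (\<sigma>*\<eta>)\<^sup>2 * (x l)\<^sup>2)"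
    by (rule sum.cong) (auto simp: power2_eq_square algebra_simps)
  also have "\<dots> = (\<Sum>l<d. (c l - w l)\<^sup>2) - 2 * \<eta> * (\<sigma> * E) + \<eta>\<^sup>2 * (\<Sum>l<d. (x l)\<^sup>2)"
    by (simp add: sum.distrib sum_subtractf sum_distrib_left E_def \<sigma>_def power_mult_distrib mult.assoc)
  also have "\<dots> \<le> (\<Sum>l<d. (c l - w l)\<^sup>2) - 2 * \<eta> * (\<eta> * b\<^sup>2) + \<eta>\<^sup>2 * b\<^sup>2"
  proof -
    have "2 * \<eta> * (\<eta> * b\<^sup>2) \<le> 2 * \<eta> * (\<sigma> * E)" using sE e eta E_def by simp
    moreover have "\<eta>\<^sup>2 * (\<Sum>l<d. (x l)\<^sup>2) \<le> \<eta>\<^sup>2 * b\<^sup>2" using xb by (simp add: mult_left_mono)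
    ultimately show ?thesis by linarith
  qed
  finally show ?thesis unfolding \<sigma>_def by (simp add: power2_eq_square)
qed

lemma perceptron:
  fixes c :: "nat \<Rightarrow> real" and x :: "'p \<Rightarrow> nat \<Rightarrow> real"
  assumes xb: "\<forall>p\<in>P. (\<Sum>l<d. (x p l)\<^sup>2) \<le> b\<^sup>2" and eta: "\<eta> > 0" and b: "b > 0"
  shows "\<exists>L. set L \<subseteq> P \<times> UNIV \<and> real (length L) \<le> (\<Sum>l<d. (c l - w l)\<^sup>2) / (\<eta>\<^sup>2 * b\<^sup>2)
     \<and> (\<forall>p\<in>P. \<bar>\<Sum>l<d. (c l - (w l + upd \<eta> x L l)) * x p l\<bar> \<le> \<eta> * b\<^sup>2)"
proof -
  define D where "D = \<eta>\<^sup>2 * b\<^sup>2"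
  have D: "D > 0" using eta b by (simp add: D_def)
  have main: "\<forall>w. (\<Sum>l<d. (c l - w l)\<^sup>2) < real N * D \<longrightarrow>
     (\<exists>L. set L \<subseteq> P \<times> UNIV \<and> real (length L) \<le> (\<Sum>l<d. (c l - w l)\<^sup>2) / D
     \<and> (\<forall>p\<in>P. \<bar>\<Sum>l<d. (c l - (w l + upd \<eta> x L l)) * x p l\<bar> \<le> \<eta> * b\<^sup>2))" for N
  proof (induction N)
    case 0
    have "\<And>w. 0 \<le> (\<Sum>l<d. (c l - w l)\<^sup>2)" by (auto intro: sum_nonneg)
    show ?case
    proof (intro allI impI)
      fix w assume "(\<Sum>l<d. (c l - w l)\<^sup>2) < real 0 * D"
      with \<open>\<And>w. 0 \<le> (\<Sum>l<d. (c l - w l)\<^sup>2)\<close>[of w] show "\<exists>L. set L \<subseteq> P \<times> UNIV \<and> real (length L) \<le> (\<Sum>l<d. (c l - w l)\<^sup>2) / D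
     \<and> (\<forall>p\<in>P. \<bar>\<Sum>l<d. (c l - (w l + upd \<eta> x L l)) * x p l\<bar> \<le> \<eta> * b\<^sup>2)" by simp
    qed
  next
    case (Suc N)
    show ?case
    proof (intro allI impI)
      fix w assume wN: "(\<Sum>l<d. (c l - w l)\<^sup>2) < real (Suc N) * D"
      have Phi0: "0 \<le> (\<Sum>l<d. (c l - w l)\<^sup>2)" by (auto intro: sum_nonneg)
      show "\<exists>L. set L \<subseteq> P \<times> UNIV \<and> real (length L) \<le> (\<Sum>l<d. (c l - w l)\<^sup>2) / D
          \<and> (\<forall>p\<in>P. \<bar>\<Sum>l<d. (c l - (w l + upd \<eta> x L l)) * x p l\<bar> \<le> \<eta> * b\<^sup>2)"
      proof (cases "\<forall>p\<in>P. \<bar>\<Sum>l<d. (c l - w l) * x p l\<bar> \<le> \<eta> * b\<^sup>2")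
        case True
        then show ?thesis using Phi0 D
          by (intro exI[of _ "[]"]) (simp add: upd_def)
      next
        case False
        then obtain p where p: "p \<in> P" and e: "\<bar>\<Sum>l<d. (c l - w l) * x p l\<bar> > \<eta> * b\<^sup>2"
          by (auto simp: not_le)
        define s where "s = ((\<Sum>l<d. (c l - w l) * x p l) > 0)"
        define w' where "w' = (\<lambda>l. w l + (if s then 1 else -1) * \<eta> * x p l)"
        have st: "(\<Sum>l<d. (c l - w' l)\<^sup>2) \<le> (\<Sum>l<d. (c l - w l)\<^sup>2) - D"
          unfolding w'_def D_def s_def using perceptron_step[OF xb[rule_format, OF p] eta e] by simp
        hence "(\<Sum>l<d. (c l - w' l)\<^sup>2) < real N * D" using wN by (simp add: algebra_simps)
        with Suc.IH obtain L' where L': "set L' \<subseteq> P \<times> UNIV"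
          "real (length L') \<le> (\<Sum>l<d. (c l - w' l)\<^sup>2) / D"
          "\<forall>p\<in>P. \<bar>\<Sum>l<d. (c l - (w' l + upd \<eta> x L' l)) * x p l\<bar> \<le> \<eta> * b\<^sup>2" by blast
        have eq: "w' l + upd \<eta> x L' l = w l + upd \<eta> x ((p,s)#L') l" for l
          by (simp add: w'_def upd_Cons)
        have "real (length ((p,s)#L')) \<le> (\<Sum>l<d. (c l - w l)\<^sup>2) / D"
        proof -
          have "(\<Sum>l<d. (c l - w' l)\<^sup>2) / D \<le> ((\<Sum>l<d. (c l - w l)\<^sup>2) - D) / D"
            using st D by (simp add: divide_right_mono)
          also have "\<dots> = (\<Sum>l<d. (c l - w l)\<^sup>2) / D - 1" using D by (simp add: field_simps)
          finally show ?thesis using L'(2) by simp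
        qed
        then show ?thesis using L' p eq
          by (intro exI[of _ "(p,s)#L'"]) auto
      qed
    qed
  qed
  obtain N :: nat where "(\<Sum>l<d. (c l - w l)\<^sup>2) / D < real N"
    using reals_Archimedean2 by blast
  hence "(\<Sum>l<d. (c l - w l)\<^sup>2) < real N * D" using D by (simp add: field_simps)
  then show ?thesis using main D_def by blast
qed



lemma col_arith:
  fixes a b eps an Kr :: real and k :: nat
  assumes pos: "a > 0" "b > 0" "eps > 0" and an: "0 \<le> an" "an \<le> a"
    and K: "Kr \<ge> 4*a*b/eps"
    and kdef: "k = nat \<lfloor>Kr * sqrt (an/(2*a))\<rfloor>"
  shows "real k \<le> Kr"
    and "k = 0 \<Longrightarrow> (an*b)\<^sup>2 \<le> an*(2*a*b\<^sup>2/Kr\<^sup>2)"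
    and "k \<ge> 1 \<Longrightarrow> (eps*real k/Kr)\<^sup>2 \<le> eps\<^sup>2*an/(2*a)"
    and "k \<ge> 1 \<Longrightarrow> an\<^sup>2 / ((eps/b\<^sup>2*real k/Kr)\<^sup>2*b\<^sup>2) \<le> 8*a*an*b\<^sup>2/eps\<^sup>2"
proof -
  have Kpos: "Kr > 0" using K pos by (smt (verit) divide_pos_pos mult_pos_pos)
  define r where "r = Kr * sqrt (an/(2*a))"
  have r0: "r \<ge> 0" using Kpos an pos by (simp add: r_def)
  have r2: "r\<^sup>2 = Kr\<^sup>2 * an/(2*a)" using an pos by (simp add: r_def power_mult_distrib)
  have kr: "real k \<le> r" "r < real k + 1" using r0 by (simp_all add: kdef r_def[symmetric])
  have "sqrt (an/(2*a)) \<le> 1" using an pos by simp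
  hence "r \<le> Kr" using Kpos by (simp add: r_def mult_left_le)
  thus "real k \<le> Kr" using kr by linarith
  show "(an*b)\<^sup>2 \<le> an*(2*a*b\<^sup>2/Kr\<^sup>2)" if "k = 0"
  proof -
    have "r\<^sup>2 < 1" using kr that r0 by (simp add: power_less_one_iff abs_square_less_1)
    hence "Kr\<^sup>2 * an < 2*a" using r2 pos by (simp add: field_simps)
    hence "an < 2*a/Kr\<^sup>2" using Kpos by (simp add: field_simps)
    hence "an * an \<le> an * (2*a/Kr\<^sup>2)" using an by (intro mult_left_mono) auto
    hence "an*an*b\<^sup>2 \<le> an * (2*a/Kr\<^sup>2) * b\<^sup>2" by (intro mult_right_mono) auto
    thus ?thesis by (simp add: power2_eq_square algebra_simps)
  qed
  show "(eps*real k/Kr)\<^sup>2 \<le> eps\<^sup>2*an/(2*a)" if "k \<ge> 1"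
  proof -
    have "(real k)\<^sup>2 \<le> r\<^sup>2" using kr by (simp add: power_mono)
    hence "(real k)\<^sup>2 / Kr\<^sup>2 \<le> an/(2*a)" using r2 Kpos by (simp add: field_simps)
    hence "eps\<^sup>2 * ((real k)\<^sup>2 / Kr\<^sup>2) \<le> eps\<^sup>2 * (an/(2*a))" by (intro mult_left_mono) auto
    thus ?thesis by (simp add: power_divide power_mult_distrib)
  qed
  show "an\<^sup>2 / ((eps/b\<^sup>2*real k/Kr)\<^sup>2*b\<^sup>2) \<le> 8*a*an*b\<^sup>2/eps\<^sup>2" if "k \<ge> 1"
  proof -
    have "r < 2 * real k" using kr that by linarith
    hence "r\<^sup>2 < (2*real k)\<^sup>2" using r0 using power_strict_mono[of r "2*real k" 2] by simp
    hence lt: "Kr\<^sup>2 * an < 8 * a * (real k)\<^sup>2" using r2 pos by (simp add: field_simps power_mult_distrib)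
    have eq: "an\<^sup>2 / ((eps/b\<^sup>2*real k/Kr)\<^sup>2*b\<^sup>2) = an\<^sup>2 * Kr\<^sup>2 * b\<^sup>2 / (eps\<^sup>2 * (real k)\<^sup>2)"
      using pos Kpos that by (simp add: field_simps power_mult_distrib power_divide)
    have "an\<^sup>2 * Kr\<^sup>2 * b\<^sup>2 \<le> an * (8 * a * (real k)\<^sup>2) * b\<^sup>2"
    proof -
      have "an * (Kr\<^sup>2 * an) \<le> an * (8 * a * (real k)\<^sup>2)" using lt an by (simp add: mult_left_mono)
      hence "an * (Kr\<^sup>2 * an) * b\<^sup>2 \<le> an * (8 * a * (real k)\<^sup>2) * b\<^sup>2" by (intro mult_right_mono) auto
      thus ?thesis by (simp add: power2_eq_square algebra_simps)
    qed
    hence "an\<^sup>2 * Kr\<^sup>2 * b\<^sup>2 / (eps\<^sup>2 * (real k)\<^sup>2) \<le> an * (8 * a * (real k)\<^sup>2) * b\<^sup>2 / (eps\<^sup>2 * (real k)\<^sup>2)"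
      by (intro divide_right_mono) auto
    also have "\<dots> = 8*a*an*b\<^sup>2/eps\<^sup>2" using that pos by (simp add: field_simps)
    finally show ?thesis using eq by simp
  qed
qed



definition Wd :: "real \<Rightarrow> nat \<Rightarrow> (nat\<Rightarrow>nat\<Rightarrow>nat\<Rightarrow>real) \<Rightarrow> (nat\<times>nat\<times>nat\<times>bool\<times>nat) list \<Rightarrow> nat \<Rightarrow> nat \<Rightarrow> real" where
  "Wd c K X cs l j = sum_list (map (\<lambda>(i,u,j',s,k). if j' = j then (if s then 1 else -1) * (c * real k / real K) * X i u l else 0) cs)"

definition dec :: "nat \<Rightarrow> nat \<Rightarrow> nat \<Rightarrow> nat \<Rightarrow> (nat\<Rightarrow>nat\<Rightarrow>nat\<Rightarrow>real) \<Rightarrow> (nat\<Rightarrow>nat\<Rightarrow>real) \<Rightarrow> real \<Rightarrow> nat \<Rightarrow> (nat\<times>nat\<times>nat\<times>bool\<times>nat) list \<Rightarrow> (nat\<Rightarrow>nat\<Rightarrow>nat\<Rightarrow>real)" where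
  "dec n U m d X M c K cs = (\<lambda>i u j. if i < n \<and> u < U \<and> j < m then (\<Sum>l<d. X i u l * (M l j + Wd c K X cs l j)) else 0)"

lemma Wd_append: "Wd c K X (xs @ ys) l j = Wd c K X xs l j + Wd c K X ys l j"
  by (simp add: Wd_def)

lemma Wd_replicate0: "Wd c K X (replicate r (i,u,j',s,0)) l j = 0"
  by (induction r) (auto simp: Wd_def)

lemma Wd_map: "Wd c K X (map (\<lambda>((i,u),s). (i,u,j',s,k)) L) l j =
   (if j' = j then upd (c * real k / real K) (\<lambda>p l. X (fst p) (snd p) l) L l else 0)"
  by (induction L) (auto simp: Wd_def upd_def)

lemma Wd_concat: "Wd c K X (concat (map g [0..<m])) l j = (\<Sum>j'<m. Wd c K X (g j') l j)"
  by (induction m) (auto simp: Wd_append Wd_def)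

lemma star_norm_le:
  assumes "n > 0" "U > 0" "\<forall>i<n. \<forall>u<U. sqrt (\<Sum>k<m. (Y i u k)\<^sup>2) \<le> e"
  shows "star_norm n U m Y \<le> e"
proof -
  have eq: "{sqrt (\<Sum>k<m. (Y i u k)\<^sup>2) | i u. i < n \<and> u < U}
      = (\<lambda>(i,u). sqrt (\<Sum>k<m. (Y i u k)\<^sup>2)) ` ({..<n} \<times> {..<U})" by auto
  have "finite ((\<lambda>(i,u). sqrt (\<Sum>k<m. (Y i u k)\<^sup>2)) ` ({..<n} \<times> {..<U}))" by simp
  moreover have "((\<lambda>(i,u). sqrt (\<Sum>k<m. (Y i u k)\<^sup>2)) ` ({..<n} \<times> {..<U})) \<noteq> {}" using assms by auto
  ultimately show ?thesis unfolding star_norm_def eq using assms(3) by (simp add: Max_le_iff)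
qed

lemma cauchy_schwarz_sum:
  fixes f g :: "nat \<Rightarrow> real"
  shows "\<bar>\<Sum>l<d. f l * g l\<bar> \<le> sqrt (\<Sum>l<d. (f l)\<^sup>2) * sqrt (\<Sum>l<d. (g l)\<^sup>2)"
proof -
  have "\<bar>\<Sum>l<d. f l * g l\<bar> \<le> (\<Sum>l<d. \<bar>f l\<bar> * \<bar>g l\<bar>)"
    using sum_abs[of "\<lambda>l. f l * g l" "{..<d}"] by (simp add: abs_mult)
  also have "\<dots> \<le> L2_set f {..<d} * L2_set g {..<d}" by (rule L2_set_mult_ineq)
  finally show ?thesis by (simp add: L2_set_def)
qed

theorem mainTheorem2:
  fixes a b eps :: real and n U d m :: nat
    and X :: "nat \<Rightarrow> nat \<Rightarrow> nat \<Rightarrow> real" and M :: "nat \<Rightarrow> nat \<Rightarrow> real"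
  assumes "a > 0" "b > 0" "eps > 0"
    and "n > 0" "U > 0" "d > 0" "m > 0"
    and "\<forall>i<n. \<forall>u<U. sqrt (\<Sum>l<d. (X i u l)\<^sup>2) \<le> b"
  shows "covering_number (tensor_space n U m)
           {tensor_mat_mult n U d X A | A. (\<forall>l j. \<not>(l < d \<and> j < m) \<longrightarrow> A l j = 0)
                                        \<and> norm21 d m (\<lambda>l j. A l j - M l j) \<le> a}
           eps (\<lambda>Y Z. star_norm n U m (\<lambda>i u k. Y i u k - Z i u k)) \<noteq> \<infinity>
       \<and> ln (real (the_enat (covering_number (tensor_space n U m)
           {tensor_mat_mult n U d X A | A. (\<forall>l j. \<not>(l < d \<and> j < m) \<longrightarrow> A l j = 0)
                                        \<and> norm21 d m (\<lambda>l j. A l j - M l j) \<le> a}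
           eps (\<lambda>Y Z. star_norm n U m (\<lambda>i u k. Y i u k - Z i u k)))))
         \<le> 64 * a\<^sup>2 * b\<^sup>2 / eps\<^sup>2 * log 2 ((8 * a * b / eps + 7) * real m * real n * real U)"
proof -
  note pos = assms(1,2,3)
  define K where "K = nat \<lceil>4*a*b/eps\<rceil>"
  have K1: "real K \<ge> 4*a*b/eps" unfolding K_def by linarith
  have hpos: "4*a*b/eps > 0" using pos by simp
  have K2: "real K \<le> 4*a*b/eps + 1"
  proof -
    have "real K = real_of_int \<lceil>4*a*b/eps\<rceil>" unfolding K_def using hpos by simp
    thus ?thesis using of_int_ceiling_le_add_one[of "4*a*b/eps"] by simp
  qed
  have Kpos: "real K > 0" using K1 pos by (smt (verit) divide_pos_pos mult_pos_pos)
  define N where "N = nat \<lfloor>8*a\<^sup>2*b\<^sup>2/eps\<^sup>2\<rfloor>"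
  define c where "c = eps/b\<^sup>2"
  define x where "x = (\<lambda>(p::nat\<times>nat) l. X (fst p) (snd p) l)"
  define P where "P = {..<n} \<times> {..<U}"
  define Alph where "Alph = {..<n} \<times> {..<U} \<times> {..<m} \<times> (UNIV::bool set) \<times> {..K}"
  define Codes where "Codes = {cs. set cs \<subseteq> Alph \<and> length cs = N}"
  define V where "V = {tensor_mat_mult n U d X A | A. (\<forall>l j. \<not>(l < d \<and> j < m) \<longrightarrow> A l j = 0)
                                        \<and> norm21 d m (\<lambda>l j. A l j - M l j) \<le> a}"
  define C0 where "C0 = dec n U m d X M c K ` Codes"
  define dst where "dst = (\<lambda>Y Z. star_norm n U m (\<lambda>i u k. Y i u k - Z i u k))"
  have xb: "\<forall>p\<in>P. (\<Sum>l<d. (x p l)\<^sup>2) \<le> b\<^sup>2"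
  proof
    fix p assume "p \<in> P"
    then obtain i u where p: "p = (i,u)" "i < n" "u < U" by (auto simp: P_def)
    have s: "sqrt (\<Sum>l<d. (X i u l)\<^sup>2) \<le> b" using assms(8) p by auto
    have "(\<Sum>l<d. (X i u l)\<^sup>2) = (sqrt (\<Sum>l<d. (X i u l)\<^sup>2))\<^sup>2" by (simp add: sum_nonneg)
    also have "\<dots> \<le> b\<^sup>2" using s by (intro power_mono) (auto intro: sum_nonneg)
    finally show "(\<Sum>l<d. (x p l)\<^sup>2) \<le> b\<^sup>2" by (simp add: x_def p)
  qed
  have key: "\<exists>Z\<in>C0. dst Y Z \<le> eps" if YV: "Y \<in> V" for Y
  proof -
    obtain A where YA: "Y = tensor_mat_mult n U d X A" and A0: "\<forall>l j. \<not>(l < d \<and> j < m) \<longrightarrow> A l j = 0"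
      and Aa: "norm21 d m (\<lambda>l j. A l j - M l j) \<le> a" using YV unfolding V_def by blast
    define cc where "cc = (\<lambda>j l. A l j - M l j)"
    define an where "an = (\<lambda>j. sqrt (\<Sum>l<d. (cc j l)\<^sup>2))"
    have an0: "an j \<ge> 0" for j by (simp add: an_def sum_nonneg)
    have an_sum: "(\<Sum>j<m. an j) \<le> a" using Aa by (simp add: norm21_def an_def cc_def)
    have an_le: "an j \<le> a" if "j < m" for j
    proof -
      have "an j \<le> (\<Sum>j<m. an j)" using that an0 by (intro member_le_sum) auto
      thus ?thesis using an_sum by linarith
    qed
    have an2: "(an j)\<^sup>2 = (\<Sum>l<d. (cc j l)\<^sup>2)" for j by (simp add: an_def sum_nonneg)
    define kk where "kk = (\<lambda>j. nat \<lfloor>real K * sqrt (an j/(2*a))\<rfloor>)"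
    define eta where "eta = (\<lambda>j. c * real (kk j) / real K)"
    define bnd where "bnd = (\<lambda>j. if kk j = 0 then an j * b else eta j * b\<^sup>2)"
    define lb where "lb = (\<lambda>j. if kk j = 0 then 0 else (an j)\<^sup>2/((eta j)\<^sup>2*b\<^sup>2))"
    note ca = col_arith[OF pos an0 _ K1 kk_def[THEN fun_cong]]
    have Q: "(bnd j)\<^sup>2 \<le> an j * (eps\<^sup>2/(2*a) + 2*a*b\<^sup>2/(real K)\<^sup>2)" if "j < m" for j
    proof (cases "kk j = 0")
      case True
      have "(bnd j)\<^sup>2 \<le> an j*(2*a*b\<^sup>2/(real K)\<^sup>2)" using ca(2)[OF an_le[OF that] True] True by (simp add: bnd_def)
      moreover have "0 \<le> an j * (eps\<^sup>2/(2*a))" using an0 pos by simp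
      ultimately show ?thesis by (simp add: distrib_left)
    next
      case False
      have "bnd j = eps * real (kk j) / real K" using False pos by (simp add: bnd_def eta_def c_def)
      hence "(bnd j)\<^sup>2 \<le> eps\<^sup>2*an j/(2*a)" using ca(3)[OF an_le[OF that]] False by simp
      moreover have "0 \<le> an j * (2*a*b\<^sup>2/(real K)\<^sup>2)" using an0 pos by simp
      ultimately show ?thesis by (simp add: distrib_left mult.commute)
    qed
    have lbb: "lb j \<le> 8*a*an j*b\<^sup>2/eps\<^sup>2" if "j < m" for j
    proof (cases "kk j = 0")
      case True thus ?thesis using an0 pos by (simp add: lb_def)
    next
      case False thus ?thesis using ca(4)[OF an_le[OF that]] by (simp add: lb_def eta_def c_def)
    qed
    have "\<forall>j. \<exists>L. set L \<subseteq> P \<times> UNIV \<and> real (length L) \<le> lb j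
        \<and> (\<forall>p\<in>P. \<bar>\<Sum>l<d. (cc j l - upd (eta j) x L l) * x p l\<bar> \<le> bnd j)"
    proof
      fix j
      show "\<exists>L. set L \<subseteq> P \<times> UNIV \<and> real (length L) \<le> lb j
        \<and> (\<forall>p\<in>P. \<bar>\<Sum>l<d. (cc j l - upd (eta j) x L l) * x p l\<bar> \<le> bnd j)"
      proof (cases "kk j = 0")
        case True
        have "\<bar>\<Sum>l<d. (cc j l - upd (eta j) x [] l) * x p l\<bar> \<le> bnd j" if "p \<in> P" for p
        proof -
          have "\<bar>\<Sum>l<d. cc j l * x p l\<bar> \<le> an j * sqrt (\<Sum>l<d. (x p l)\<^sup>2)"
            unfolding an_def by (rule cauchy_schwarz_sum)
          also have "\<dots> \<le> an j * b"
          proof -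
            have "sqrt (\<Sum>l<d. (x p l)\<^sup>2) \<le> sqrt (b\<^sup>2)" using xb that by (intro real_sqrt_le_mono) auto
            thus ?thesis using an0 pos by (intro mult_left_mono) auto
          qed
          finally show ?thesis using True by (simp add: upd_def bnd_def)
        qed
        then show ?thesis using True by (intro exI[of _ "[]"]) (simp add: lb_def)
      next
        case False
        have etapos: "eta j > 0" using False pos Kpos by (simp add: eta_def c_def)
        from perceptron[OF xb etapos pos(2), of "cc j" "\<lambda>_. 0"] obtain L where
          L: "set L \<subseteq> P \<times> UNIV" "real (length L) \<le> (\<Sum>l<d. (cc j l - 0)\<^sup>2) / ((eta j)\<^sup>2 * b\<^sup>2)"
             "\<forall>p\<in>P. \<bar>\<Sum>l<d. (cc j l - (0 + upd (eta j) x L l)) * x p l\<bar> \<le> eta j * b\<^sup>2"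
          by blast
        show ?thesis using L False an2[of j] by (intro exI[of _ L]) (simp add: lb_def bnd_def)
      qed
    qed
    then obtain Lf where Lf: "\<And>j. set (Lf j) \<subseteq> P \<times> UNIV" "\<And>j. real (length (Lf j)) \<le> lb j"
       "\<And>j p. p \<in> P \<Longrightarrow> \<bar>\<Sum>l<d. (cc j l - upd (eta j) x (Lf j) l) * x p l\<bar> \<le> bnd j"
      by metis
    define g where "g = (\<lambda>j. map (\<lambda>((i,u),s). (i,u,j,s,kk j)) (Lf j))"
    define cs0 where "cs0 = concat (map g [0..<m])"
    define cs where "cs = cs0 @ replicate (N - length cs0) (0,0,0,True,0)"
    have "length cs0 = (\<Sum>j<m. length (Lf j))"
      by (simp add: cs0_def g_def length_concat sum_list_sum_nth atLeast0LessThan)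
    hence "real (length cs0) = (\<Sum>j<m. real (length (Lf j)))" by simp
    also have "\<dots> \<le> (\<Sum>j<m. 8*a*an j*b\<^sup>2/eps\<^sup>2)" using Lf(2) lbb by (intro sum_mono) (meson order_trans lessThan_iff)
    also have "\<dots> = 8*a*b\<^sup>2/eps\<^sup>2 * (\<Sum>j<m. an j)" by (subst sum_distrib_left) (intro sum.cong refl, simp add: field_simps)
    also have "\<dots> \<le> 8*a*b\<^sup>2/eps\<^sup>2 * a" using an_sum pos by (intro mult_left_mono) auto
    also have "\<dots> = 8*a\<^sup>2*b\<^sup>2/eps\<^sup>2" by (simp add: power2_eq_square)
    finally have "length cs0 \<le> N" unfolding N_def by (rule le_nat_floor)
    hence lencs: "length cs = N" by (simp add: cs_def)
    have "set cs0 \<subseteq> Alph"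
    proof
      fix y assume "y \<in> set cs0"
      then obtain j where j: "j < m" "y \<in> set (g j)" by (auto simp: cs0_def)
      then obtain i u s where y: "y = (i,u,j,s,kk j)" "((i,u),s) \<in> set (Lf j)" by (auto simp: g_def)
      have "i < n" "u < U" using Lf(1)[of j] y(2) by (auto simp: P_def)
      moreover have "kk j \<le> K" using ca(1)[OF an_le[OF j(1)]] by simp
      ultimately show "y \<in> Alph" using j y by (simp add: Alph_def)
    qed
    moreover have "(0::nat,0::nat,0::nat,True,0::nat) \<in> Alph" using assms(4,5,7) by (simp add: Alph_def)
    ultimately have "cs \<in> Codes" using lencs by (auto simp: Codes_def cs_def)
    hence Zin: "dec n U m d X M c K cs \<in> C0" by (simp add: C0_def)
    have Wd_eq: "Wd c K X cs l j = upd (eta j) x (Lf j) l" if "j < m" for l j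
    proof -
      have "Wd c K X cs l j = (\<Sum>j'<m. Wd c K X (g j') l j)"
        by (simp add: cs_def cs0_def Wd_append Wd_replicate0 Wd_concat)
      also have "\<dots> = (\<Sum>j'<m. if j' = j then upd (eta j) x (Lf j) l else 0)"
        by (intro sum.cong refl) (simp add: g_def Wd_map eta_def x_def)
      also have "\<dots> = upd (eta j) x (Lf j) l" using that by simp
      finally show ?thesis .
    qed
    have "dst Y (dec n U m d X M c K cs) \<le> eps"
      unfolding dst_def
    proof (rule star_norm_le[OF assms(4,5)], intro allI impI)
      fix i u assume iu: "i < n" "u < U"
      have e: "\<bar>Y i u k - dec n U m d X M c K cs i u k\<bar> \<le> bnd k" if "k < m" for k
      proof -
        have "Y i u k - dec n U m d X M c K cs i u k = (\<Sum>l<d. (cc k l - upd (eta k) x (Lf k) l) * x (i,u) l)"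
          using iu that by (simp add: YA tensor_mat_mult_def dec_def Wd_eq cc_def x_def sum_subtractf[symmetric] algebra_simps)
        thus ?thesis using Lf(3)[of "(i,u)" k] iu by (simp add: P_def)
      qed
      have "(\<Sum>k<m. (Y i u k - dec n U m d X M c K cs i u k)\<^sup>2) \<le> (\<Sum>k<m. an k * (eps\<^sup>2/(2*a) + 2*a*b\<^sup>2/(real K)\<^sup>2))"
      proof (intro sum_mono)
        fix k assume k: "k \<in> {..<m}"
        have "(Y i u k - dec n U m d X M c K cs i u k)\<^sup>2 \<le> (bnd k)\<^sup>2"
          using e[of k] k by (simp add: abs_le_square_iff[symmetric] power2_abs)
        thus "(Y i u k - dec n U m d X M c K cs i u k)\<^sup>2 \<le> an k * (eps\<^sup>2/(2*a) + 2*a*b\<^sup>2/(real K)\<^sup>2)"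
          using Q[of k] k by simp
      qed
      also have "\<dots> = (\<Sum>k<m. an k) * (eps\<^sup>2/(2*a) + 2*a*b\<^sup>2/(real K)\<^sup>2)" by (simp add: sum_distrib_right)
      also have "\<dots> \<le> a * (eps\<^sup>2/(2*a) + 2*a*b\<^sup>2/(real K)\<^sup>2)" using an_sum pos by (intro mult_right_mono) auto
      also have "\<dots> = eps\<^sup>2/2 + 2*a\<^sup>2*b\<^sup>2/(real K)\<^sup>2" using pos by (simp add: field_simps power2_eq_square)
      also have "\<dots> \<le> eps\<^sup>2"
      proof -
        have "(4*a*b/eps)\<^sup>2 \<le> (real K)\<^sup>2" using K1 pos by (intro power_mono) auto
        hence "16*a\<^sup>2*b\<^sup>2 \<le> (real K)\<^sup>2 * eps\<^sup>2" using pos by (simp add: field_simps power_divide power_mult_distrib)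
        hence "(16*a\<^sup>2*b\<^sup>2)/(real K)\<^sup>2 \<le> ((real K)\<^sup>2 * eps\<^sup>2)/(real K)\<^sup>2" using Kpos by (intro divide_right_mono) auto
        hence "16*(a\<^sup>2*b\<^sup>2/(real K)\<^sup>2) \<le> eps\<^sup>2" using Kpos by simp
        moreover have "2*a\<^sup>2*b\<^sup>2/(real K)\<^sup>2 = 2*(a\<^sup>2*b\<^sup>2/(real K)\<^sup>2)" by simp
        moreover have "eps\<^sup>2 \<ge> 0" by simp
        ultimately show ?thesis by linarith
      qed
      finally have "(\<Sum>k<m. (Y i u k - dec n U m d X M c K cs i u k)\<^sup>2) \<le> eps\<^sup>2" .
      from real_sqrt_le_mono[OF this] show "sqrt (\<Sum>k<m. (Y i u k - dec n U m d X M c K cs i u k)\<^sup>2) \<le> eps"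
        using pos by simp
    qed
    thus ?thesis using Zin by blast
  qed
  have finA: "finite Alph" by (simp add: Alph_def)
  have finC: "finite Codes" unfolding Codes_def by (rule finite_lists_length_eq[OF finA])
  have cardC0: "card C0 \<le> card Alph ^ N"
  proof -
    have "card C0 \<le> card Codes" unfolding C0_def by (rule card_image_le[OF finC])
    also have "card Codes = card Alph ^ N" unfolding Codes_def by (rule card_lists_length_eq[OF finA])
    finally show ?thesis .
  qed
  have adm: "C0 \<in> {C. C \<subseteq> tensor_space n U m \<and> finite C \<and> (\<forall>v\<in>V. \<exists>c\<in>C. dst v c \<le> eps)}"
    using key finC by (auto simp: C0_def dec_def tensor_space_def)
  define cov where "cov = covering_number (tensor_space n U m) V eps dst"
  have covle: "cov \<le> enat (card C0)" unfolding cov_def covering_number_def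
    by (rule INF_lower[OF adm])
  hence covfin: "cov \<noteq> \<infinity>" by (cases cov) auto
  then obtain v where v: "cov = enat v" by auto
  have vle: "v \<le> card Alph ^ N" using covle v cardC0 by simp
  define q where "q = card Alph"
  have q: "q = n * (U * (m * (2 * (K + 1))))" by (simp add: q_def Alph_def card_cartesian_product)
  have "q \<ge> 1" unfolding q using assms(4,5,7) by (simp add: Suc_le_eq)
  hence q1: "real q \<ge> 1" by simp
  define R where "R = (8 * a * b / eps + 7) * real m * real n * real U"
  have qR: "real q \<le> R"
  proof -
    have "real (2 * (K + 1)) \<le> 8 * a * b / eps + 7" using K2 by simp
    hence "real m * real n * real U * real (2 * (K + 1)) \<le> real m * real n * real U * (8 * a * b / eps + 7)"
      by (intro mult_left_mono) auto
    thus ?thesis by (simp add: q R_def algebra_simps)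
  qed
  have lnq: "ln (real q) \<le> log 2 R"
  proof -
    have "ln (real q) \<le> ln R" using q1 qR by simp
    also have "\<dots> \<le> ln R / ln 2"
    proof -
      have "ln R \<ge> 0" using q1 qR by simp
      moreover have "0 < ln (2::real)" "ln (2::real) \<le> 1" using ln_le_minus_one[of 2] by simp_all
      ultimately show ?thesis by (simp add: le_divide_eq mult_left_le)
    qed
    finally show ?thesis by (simp add: log_def)
  qed
  have lnv: "ln (real v) \<le> real N * ln (real q)"
  proof (cases "v = 0")
    case True thus ?thesis using q1 by simp
  next
    case False
    have "ln (real v) \<le> ln (real q ^ N)" using False vle q_def q1
      by (subst ln_le_cancel_iff) (auto simp flip: of_nat_power)
    thus ?thesis by (simp add: ln_realpow q1)
  qed
  have NN: "real N \<le> 8*a\<^sup>2*b\<^sup>2/eps\<^sup>2" unfolding N_def using pos by simp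
  have lq0: "ln (real q) \<ge> 0" using q1 by simp
  have "ln (real (the_enat cov)) \<le> 64 * a\<^sup>2 * b\<^sup>2 / eps\<^sup>2 * log 2 R"
  proof -
    have "ln (real (the_enat cov)) \<le> real N * ln (real q)" using lnv v by simp
    also have "\<dots> \<le> 8*a\<^sup>2*b\<^sup>2/eps\<^sup>2 * ln (real q)" using NN lq0 by (intro mult_right_mono) auto
    also have "\<dots> \<le> 8*a\<^sup>2*b\<^sup>2/eps\<^sup>2 * log 2 R" using lnq by (intro mult_left_mono) auto
    also have "\<dots> \<le> 64*a\<^sup>2*b\<^sup>2/eps\<^sup>2 * log 2 R" using lnq lq0 by (intro mult_right_mono) (auto simp: divide_right_mono)
    finally show ?thesis .
  qed
  with covfin show ?thesis unfolding cov_def V_def dst_def R_def by simp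
qed

end
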